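(* Let $p$ be a prime and let $\Phi_p$ be the set of all $\operatorname{fpt}(R,f)$, where $R$ ranges over $F$-pure rings of characteristic $p$ and $f$ over non-zero non-units of $R$. Then for every $\lambda\in\Phi_p$ and every integer $e\ge1$, we have $\langle\lambda\rangle_e\cdot\frac{p^e}{p^e-1}\le\lambda$.
   Context: A ring $R$ of characteristic $p$ is $F$-pure if $R\subseteq R^{1/p}$ splits as a map of $R$-modules. Roots and splitting. $R^{1/p^e}$ is the ring of formal $p^e$-th roots of elements of $R$, containing $R$ via $r\mapsto (r^{p^e})^{1/p^e}$. We write $f^{a/p^e}:=(f^a)^{1/p^e}$. The inclusion $R\cdot t\subseteq R^{1/p^e}$ splits if some $R$-linear $\theta:R^{1/p^e}\to R$ has $\theta(t)=1$. $F$-pure threshold. $(R,f^\lambda)$ is $F$-pure if $R\cdot f^{\lfloor (p^e-1)\lambda\rfloor/p^e}\subseteq R^{1/p^e}$ splits for all $e\ge1$. $\operatorname{fpt}(R,f)$ is the supremum of all $\lambda\ge0$ with $(R,f^\lambda)$ $F$-pure; it lies in $[0,1]$. Truncations. For $\alpha\in(0,1]$ with non-terminating base $p$ expansion $\alpha=\sum_{e\ge1}a_e/p^e$ (digits $0\le a_e\le p-1$, not all eventually zero), $\langle\alpha\rangle_e:=\sum_{i=1}^e a_i/p^i$. By convention $\langle0\rangle_e=0$. *)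

theory Defs
  imports Complex_Main "HOL-Computational_Algebra.Primes"
begin

text \<open>R-linear maps R^{1/p^e} -> R. The ring of formal p^e-th roots R^{1/p^e} is a
  copy of R (s^{1/p^e} corresponds to s); r in R acts on it by r . s^{1/p^e} = (r^{p^e} s)^{1/p^e}.\<close>
definition root_linear :: "nat \<Rightarrow> nat \<Rightarrow> ('a::comm_ring_1 \<Rightarrow> 'a) \<Rightarrow> bool" where
  "root_linear p e th \<longleftrightarrow>
     (\<forall>x y. th (x + y) = th x + th y) \<and> (\<forall>r s. th (r ^ (p ^ e) * s) = r * th s)"

text \<open>R . t^{1/p^e} \<subseteq> R^{1/p^e} splits (t given as element of R, representing t^{1/p^e}).\<close>
definition root_splits :: "nat \<Rightarrow> nat \<Rightarrow> 'a::comm_ring_1 \<Rightarrow> bool" where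
  "root_splits p e t \<longleftrightarrow> (\<exists>th. root_linear p e th \<and> th t = 1)"

definition F_pure_ring :: "nat \<Rightarrow> 'a::comm_ring_1 itself \<Rightarrow> bool" where
  "F_pure_ring p R \<longleftrightarrow> root_splits p 1 (1::'a)"

definition F_pure_pair :: "nat \<Rightarrow> 'a::comm_ring_1 \<Rightarrow> real \<Rightarrow> bool" where
  "F_pure_pair p f lam \<longleftrightarrow>
     (\<forall>e\<ge>1. root_splits p e (f ^ nat \<lfloor>(real p ^ e - 1) * lam\<rfloor>))"

definition fpt :: "nat \<Rightarrow> 'a::comm_ring_1 \<Rightarrow> real" where
  "fpt p f = Sup {lam. lam \<ge> 0 \<and> F_pure_pair p f lam}"

text \<open>Non-terminating base-p expansion alpha = sum_{i>=1} a_i / p^i (a 0 = 0 unused).\<close>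
definition nonterm_expansion :: "nat \<Rightarrow> real \<Rightarrow> (nat \<Rightarrow> nat) \<Rightarrow> bool" where
  "nonterm_expansion p alpha a \<longleftrightarrow>
     a 0 = 0 \<and> (\<forall>i. a i \<le> p - 1) \<and> (\<forall>N. \<exists>i>N. a i \<noteq> 0) \<and>
     (\<lambda>i. real (a (Suc i)) / real p ^ Suc i) sums alpha"

definition trunc :: "nat \<Rightarrow> real \<Rightarrow> nat \<Rightarrow> real" where
  "trunc p alpha e =
     (if alpha = 0 then 0
      else (let a = (THE a. nonterm_expansion p alpha a)
            in \<Sum>i=1..e. real (a i) / real p ^ i))"

end

theory Submission
  imports Defs
begin


lemma rl_id: "root_linear p 0 (id::'a::comm_ring_1\<Rightarrow>'a)"
  by (simp add: root_linear_def)

lemma rl_comp: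
  fixes th1 th2 :: "'a::comm_ring_1 \<Rightarrow> 'a"
  assumes "root_linear p d th1" "root_linear p e th2"
  shows "root_linear p (d+e) (th2 \<circ> th1)"
  unfolding root_linear_def
proof (intro conjI allI)
  fix x y show "(th2 \<circ> th1) (x + y) = (th2 \<circ> th1) x + (th2 \<circ> th1) y"
    using assms by (simp add: root_linear_def)
next
  fix r s :: 'a
  have "r ^ p ^ (d + e) = (r ^ p ^ e) ^ p ^ d"
  proof -
    have "p ^ (d+e) = p^e * p^d" by (simp add: power_add)
    then show ?thesis using power_mult[of r "p^e" "p^d"] by simp
  qed
  then show "(th2 \<circ> th1) (r ^ p ^ (d + e) * s) = r * (th2 \<circ> th1) s"
    using assms by (simp add: root_linear_def)
qed

lemma rl_mult:
  fixes th :: "'a::comm_ring_1 \<Rightarrow> 'a"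
  assumes "root_linear p e th"
  shows "root_linear p e (\<lambda>x. th (g * x))"
  using assms unfolding root_linear_def
proof (intro conjI allI)
  fix r s :: 'a
  assume a: "(\<forall>x y. th (x + y) = th x + th y) \<and> (\<forall>r s. th (r ^ p ^ e * s) = r * th s)"
  have eq: "g * (r ^ p ^ e * s) = r ^ p ^ e * (g * s)" by (simp add: mult.left_commute)
  have b: "th (r ^ p ^ e * (g * s)) = r * th (g * s)" using a by blast
  show "th (g * (r ^ p ^ e * s)) = r * th (g * s)" unfolding eq by (rule b)
qed (simp add: distrib_left)

lemma rl_down:
  fixes th :: "'a::comm_ring_1 \<Rightarrow> 'a"
  assumes "prime p" "CHAR('a) = p" "root_linear p (e+d) th"
  shows "root_linear p e (\<lambda>s. th (s ^ (p^d) * g))"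
  unfolding root_linear_def
proof (intro conjI allI)
  fix x y :: 'a
  have "(x+y)^(p^d) = x^(p^d) + y^(p^d)"
    by (rule freshmans_dream') (use assms in auto)
  then show "th ((x + y) ^ p ^ d * g) = th (x ^ p ^ d * g) + th (y ^ p ^ d * g)"
    using assms(3) by (simp add: root_linear_def distrib_right)
next
  fix r s :: 'a
  have "(r ^ p ^ e * s) ^ p ^ d * g = r ^ p ^ (e+d) * (s ^ p ^ d * g)"
    by (simp add: power_mult_distrib power_add power_mult[symmetric] mult.assoc)
  then show "th ((r ^ p ^ e * s) ^ p ^ d * g) = r * th (s ^ p ^ d * g)"
    using assms(3) by (simp add: root_linear_def)
qed

lemma rs_one:
  assumes "F_pure_ring p TYPE('a::comm_ring_1)"
  shows "root_splits p e (1::'a)"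
proof (induction e)
  case 0 show ?case unfolding root_splits_def using rl_id by force
next
  case (Suc e)
  obtain th where th: "root_linear p e th" "th (1::'a) = 1" using Suc unfolding root_splits_def by blast
  obtain t1 where t1: "root_linear p 1 t1" "t1 (1::'a) = 1" using assms
    unfolding F_pure_ring_def root_splits_def by blast
  have "root_linear p (1+e) (th \<circ> t1)" by (rule rl_comp[OF t1(1) th(1)])
  then show ?case unfolding root_splits_def using th t1 by (intro exI[of _ "th \<circ> t1"]) simp
qed

lemma rs_mono:
  assumes "root_splits p e ((f::'a::comm_ring_1)^N)" "M \<le> N"
  shows "root_splits p e (f^M)"
proof -
  obtain th where th: "root_linear p e th" "th (f^N) = 1" using assms unfolding root_splits_def by blast
  have "f^N = f^(N-M) * f^M" using assms(2) by (simp flip: power_add)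
  then show ?thesis unfolding root_splits_def using rl_mult[OF th(1), of "f^(N-M)"] th(2)
    by (intro exI[of _ "\<lambda>x. th (f^(N-M) * x)"]) simp
qed

lemma rs_down:
  fixes f :: "'a::comm_ring_1"
  assumes "prime p" "CHAR('a) = p" "root_splits p (e+d) (f^N)" "M * p^d \<le> N"
  shows "root_splits p e (f^M)"
proof -
  obtain th where th: "root_linear p (e+d) th" "th (f^N) = 1" using assms unfolding root_splits_def by blast
  have "(f^M)^(p^d) * f^(N - M*p^d) = f^N" using assms(4) by (simp flip: power_add power_mult)
  then show ?thesis unfolding root_splits_def using rl_down[OF assms(1,2) th(1), of "f^(N - M*p^d)"] th(2)
    by (intro exI[of _ "\<lambda>s. th (s ^ (p^d) * f^(N - M*p^d))"]) simp
qed

lemma rs_up: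
  fixes f :: "'a::comm_ring_1"
  assumes "root_splits p e (f^a)" "root_splits p E (f^A)"
  shows "root_splits p (e+E) (f^(A*p^e + a))"
proof -
  obtain th where th: "root_linear p e th" "th (f^a) = 1" using assms unfolding root_splits_def by blast
  obtain ph where ph: "root_linear p E ph" "ph (f^A) = 1" using assms unfolding root_splits_def by blast
  have "th (f^(A*p^e + a)) = f^A * th (f^a)"
    using th(1) unfolding root_linear_def by (simp add: power_add power_mult)
  then show ?thesis unfolding root_splits_def using rl_comp[OF th(1) ph(1)] th(2) ph(2)
    by (intro exI[of _ "ph \<circ> th"]) simp
qed

lemma rs_nonunit:
  fixes f :: "'a::comm_ring_1"
  assumes "root_splits p e (f^N)" "p^e \<le> N" "\<not> f dvd 1"
  shows False
proof -
  obtain th where th: "root_linear p e th" "th (f^N) = 1" using assms unfolding root_splits_def by blast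
  have "f^N = f^(p^e) * f^(N-p^e)" using assms(2) by (simp flip: power_add)
  then have "th (f^N) = f * th (f^(N-p^e))" using th(1) unfolding root_linear_def by simp
  then show False using th(2) assms(3) by (metis dvdI)
qed



lemma psum_shift:
  "(\<Sum>i<n. real (a (Suc i)) / real p ^ Suc i) = (\<Sum>i=1..n. real (a i) / real p ^ i)"
  by (induction n) (simp_all add: atLeastAtMostSuc_conv)

lemma psum_int:
  assumes "p \<ge> 2"
  shows "(\<Sum>i=1..n. real (a i) / real p ^ i) * real p ^ n = real (\<Sum>i=1..n. a i * p ^ (n - i))"
proof -
  have "(\<Sum>i=1..n. real (a i) / real p ^ i) * real p ^ n = (\<Sum>i=1..n. real (a i) / real p ^ i * real p ^ n)"
    by (simp add: sum_distrib_right)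
  also have "\<dots> = (\<Sum>i=1..n. real (a i * p ^ (n - i)))"
  proof (rule sum.cong)
    fix i assume "i \<in> {1..n}"
    then have "real p ^ n = real p ^ i * real p ^ (n - i)" by (simp flip: power_add)
    then show "real (a i) / real p ^ i * real p ^ n = real (a i * p ^ (n - i))"
      using assms by simp
  qed simp
  finally show ?thesis by simp
qed

lemma exp_partial:
  assumes p: "p \<ge> 2" and ex: "nonterm_expansion p \<alpha> a"
  shows "(\<Sum>i=1..n. real (a i) / real p ^ i) = of_int (\<lceil>\<alpha> * real p ^ n\<rceil> - 1) / real p ^ n"
proof -
  define g where "g i = real (a (Suc i)) / real p ^ Suc i" for i
  have gs: "g sums \<alpha>" using ex unfolding nonterm_expansion_def g_def by simp
  have dig: "a i \<le> p - 1" for i using ex unfolding nonterm_expansion_def by simp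
  define S where "S = (\<Sum>i=1..n. real (a i) / real p ^ i)"
  have Sg: "sum g {..<n} = S" unfolding g_def S_def by (rule psum_shift)
  have ts: "(\<lambda>i. g (i + n)) sums (\<alpha> - S)" using sums_split_initial_segment[OF gs, of n] Sg by simp
  have gnn: "0 \<le> g i" for i unfolding g_def by simp
  obtain i where i: "i > n" "a i \<noteq> 0" using ex unfolding nonterm_expansion_def by blast
  define j where "j = i - Suc n"
  have ij: "Suc (j + n) = i" using i j_def by simp
  have "0 < g (j + n)" unfolding g_def using ij i p by simp
  then have tpos: "0 < \<alpha> - S"
    using suminf_pos2[OF sums_summable[OF ts], of j] gnn sums_unique[OF ts] by simp
  define h where "h i = (real p - 1) / real p ^ Suc n * (1 / real p) ^ i" for i
  have "(\<lambda>i. (1/real p)^i) sums (1 / (1 - 1/real p))" by (rule geometric_sums) (use p in simp)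
  then have hs0: "h sums ((real p - 1) / real p ^ Suc n * (1 / (1 - 1/real p)))"
    unfolding h_def by (rule sums_mult)
  have "(real p - 1) / real p ^ Suc n * (1 / (1 - 1/real p)) = 1 / real p ^ n"
    using p by (simp add: field_simps)
  with hs0 have hs: "h sums (1 / real p ^ n)" by simp
  have "g (i + n) \<le> h i" for i
  proof -
    have "real (a (Suc (i+n))) \<le> real p - 1" using dig[of "Suc (i+n)"] p by linarith
    then have "g (i+n) \<le> (real p - 1) / real p ^ Suc (i+n)" unfolding g_def
      by (intro divide_right_mono) simp_all
    also have "\<dots> = h i" unfolding h_def using p by (simp add: power_add field_simps)
    finally show ?thesis .
  qed
  then have tle: "\<alpha> - S \<le> 1 / real p ^ n" using sums_le[OF _ ts hs] by blast
  obtain N where N: "S * real p ^ n = real N" using psum_int[OF p] unfolding S_def by blast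
  have pp: "real p ^ n > 0" using p by simp
  have "real N < \<alpha> * real p ^ n" using tpos N pp
    by (metis diff_gt_0_iff_gt mult_strict_right_mono)
  moreover have "\<alpha> * real p ^ n \<le> real N + 1"
  proof -
    have "(\<alpha> - S) * real p ^ n \<le> 1" using tle pp by (simp add: field_simps)
    then show ?thesis using N by (simp add: algebra_simps)
  qed
  ultimately have "\<lceil>\<alpha> * real p ^ n\<rceil> = int N + 1" by (subst ceiling_eq_iff) simp
  then have "of_int (\<lceil>\<alpha> * real p ^ n\<rceil> - 1) / real p ^ n = S"
    using N pp by (simp add: field_simps)
  then show ?thesis unfolding S_def by simp
qed

lemma exp_unique:
  assumes p: "p \<ge> 2" and "nonterm_expansion p \<alpha> a" "nonterm_expansion p \<alpha> b"
  shows "a = b"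
proof
  fix i
  show "a i = b i"
  proof (cases i)
    case 0 then show ?thesis using assms unfolding nonterm_expansion_def by simp
  next
    case (Suc n)
    have A: "(\<Sum>i=1..Suc n. real (a i) / real p ^ i) = (\<Sum>i=1..n. real (a i) / real p ^ i) + real (a (Suc n)) / real p ^ Suc n"
      by simp
    have B: "(\<Sum>i=1..Suc n. real (b i) / real p ^ i) = (\<Sum>i=1..n. real (b i) / real p ^ i) + real (b (Suc n)) / real p ^ Suc n"
      by simp
    have "real (a (Suc n)) / real p ^ Suc n = real (b (Suc n)) / real p ^ Suc n"
      using A B exp_partial[OF p assms(2), of n] exp_partial[OF p assms(3), of n]
        exp_partial[OF p assms(2), of "Suc n"] exp_partial[OF p assms(3), of "Suc n"] by linarith
    then show ?thesis using Suc p by simp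
  qed
qed



lemma exp_exists:
  assumes p: "p \<ge> 2" and al: "0 < \<alpha>" "\<alpha> \<le> 1"
  shows "\<exists>a. nonterm_expansion p \<alpha> a"
proof -
  define c where "c i = \<lceil>\<alpha> * real p ^ i\<rceil> - 1" for i
  have F1: "of_int (c i) < \<alpha> * real p ^ i" "\<alpha> * real p ^ i \<le> of_int (c i) + 1" for i
    unfolding c_def by linarith+
  have c0: "c 0 = 0" unfolding c_def using al by (simp add: ceiling_eq_iff)
  have F2a: "int p * c i \<le> c (Suc i)" for i
  proof -
    have "of_int (int p * c i) < \<alpha> * real p ^ Suc i" using F1(1)[of i] p
      by (simp add: mult.left_commute)
    then have "int p * c i < \<lceil>\<alpha> * real p ^ Suc i\<rceil>" by (simp only: less_ceiling_iff)
    then show ?thesis unfolding c_def by linarith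
  qed
  have F2b: "c (Suc i) \<le> int p * c i + int p - 1" for i
  proof -
    have "\<alpha> * real p ^ Suc i \<le> real p * (of_int (c i) + 1)" using F1(2)[of i] p
      by (simp add: mult.left_commute)
    then have "real_of_int (c (Suc i)) < real_of_int (int p * c i + int p)" using F1(1)[of "Suc i"]
      by (simp add: algebra_simps)
    then have "c (Suc i) < int p * c i + int p" by (simp only: of_int_less_iff)
    then show ?thesis by linarith
  qed
  have F2a': "int p * c i \<le> c (Suc i)" for i using F2a[of i] .
  define a where "a i = (if i = 0 then 0 else nat (c i - int p * c (i - 1)))" for i
  have aS: "real (a (Suc i)) = of_int (c (Suc i)) - real p * of_int (c i)" for i
    unfolding a_def using F2a'[of i] by simp
  have ps: "(\<Sum>i=1..n. real (a i) / real p ^ i) = of_int (c n) / real p ^ n" for n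
  proof (induction n)
    case 0 then show ?case using c0 by simp
  next
    case (Suc n)
    have "(\<Sum>i=1..Suc n. real (a i) / real p ^ i) = of_int (c n) / real p ^ n + real (a (Suc n)) / real p ^ Suc n"
      using Suc by simp
    also have "\<dots> = of_int (c (Suc n)) / real p ^ Suc n" unfolding aS using p by (simp add: field_simps)
    finally show ?case .
  qed
  define g where "g i = real (a (Suc i)) / real p ^ Suc i" for i
  have gps: "sum g {..<n} = of_int (c n) / real p ^ n" for n
    unfolding g_def psum_shift ps ..
  have lo: "\<alpha> - (1/real p)^n \<le> of_int (c n) / real p ^ n" for n
  proof -
    have pp: "real p ^ n > 0" using p by simp
    have "\<alpha> \<le> (of_int (c n) + 1) / real p ^ n" using F1(2)[of n] pp by (simp add: field_simps)
    also have "\<dots> = of_int (c n) / real p ^ n + (1/real p)^n" by (simp add: power_divide add_divide_distrib)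
    finally show ?thesis by simp
  qed
  have hi: "of_int (c n) / real p ^ n \<le> \<alpha>" for n
    using F1(1)[of n] p by (simp add: field_simps)
  have "norm (1/real p) < 1" using p by simp
  then have "(\<lambda>n. (1/real p)^n) \<longlonglongrightarrow> 0" by (rule LIMSEQ_power_zero)
  then have L0: "(\<lambda>n. \<alpha> - (1/real p)^n) \<longlonglongrightarrow> \<alpha> - 0" by (rule tendsto_diff[OF tendsto_const])
  have L: "(\<lambda>n. \<alpha> - (1/real p)^n) \<longlonglongrightarrow> \<alpha>" using L0 by simp
  have E1: "\<forall>\<^sub>F n in sequentially. \<alpha> - (1/real p)^n \<le> of_int (c n) / real p ^ n"
    using lo by (intro always_eventually allI)
  have E2: "\<forall>\<^sub>F n in sequentially. of_int (c n) / real p ^ n \<le> \<alpha>"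
    using hi by (intro always_eventually allI)
  have "(\<lambda>n. of_int (c n) / real p ^ n) \<longlonglongrightarrow> \<alpha>"
    by (rule tendsto_sandwich[OF E1 E2 L tendsto_const])
  then have "(\<lambda>n. sum g {..<n}) \<longlonglongrightarrow> \<alpha>" unfolding gps .
  then have gs: "g sums \<alpha>" unfolding sums_def .
  have dig: "a i \<le> p - 1" for i
  proof (cases i)
    case 0 then show ?thesis by (simp add: a_def)
  next
    case (Suc j)
    have "c (Suc j) - int p * c j \<le> int (p - 1)" using F2b[of j] p by (simp add: of_nat_diff)
    then show ?thesis unfolding Suc a_def by (simp add: nat_le_iff)
  qed
  have nt: "\<forall>N. \<exists>i>N. a i \<noteq> 0"
  proof (rule ccontr)
    assume "\<not> ?thesis"
    then obtain N where N: "\<And>i. i > N \<Longrightarrow> a i = 0" by blast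
    have ts: "(\<lambda>i. g (i + N)) sums (\<alpha> - sum g {..<N})" by (rule sums_split_initial_segment[OF gs])
    have "(\<lambda>i. g (i + N)) = (\<lambda>i. 0)" unfolding g_def using N by (intro ext) simp
    then have ts0: "(\<lambda>i. 0::real) sums (\<alpha> - sum g {..<N})" using ts by simp
    have "\<alpha> - sum g {..<N} = 0" using sums_unique2[OF ts0 sums_zero] .
    then have "\<alpha> = of_int (c N) / real p ^ N" using gps by simp
    moreover have "of_int (c N) / real p ^ N < \<alpha>" using F1(1)[of N] p by (simp add: field_simps)
    ultimately show False by simp
  qed
  have "nonterm_expansion p \<alpha> a"
  proof -
    have a0: "a 0 = 0" by (simp add: a_def)
    show ?thesis unfolding nonterm_expansion_def using a0 dig nt gs[unfolded g_def] by blast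
  qed
  then show ?thesis by blast
qed

lemma trunc_eq:
  assumes p: "p \<ge> 2" and al: "0 < \<alpha>" "\<alpha> \<le> 1"
  shows "trunc p \<alpha> e = of_int (\<lceil>\<alpha> * real p ^ e\<rceil> - 1) / real p ^ e"
proof -
  obtain a where a: "nonterm_expansion p \<alpha> a" using exp_exists[OF assms] by blast
  have "(THE a. nonterm_expansion p \<alpha> a) = a"
    using a exp_unique[OF p] by (intro the_equality) auto
  then show ?thesis unfolding trunc_def using al exp_partial[OF p a] by (simp add: Let_def)
qed



fun Aseq :: "nat \<Rightarrow> nat \<Rightarrow> nat \<Rightarrow> nat" where
  "Aseq q C 0 = 0"
| "Aseq q C (Suc k) = Aseq q C k * q + C"

lemma Aseq_real: "real (Aseq q C k) * (real q - 1) = real C * (real q ^ k - 1)"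
  by (induction k) (simp_all add: algebra_simps)

lemma Aseq_splits:
  fixes f :: "'a::comm_ring_1"
  assumes "F_pure_ring p TYPE('a)" "root_splits p e (f^C)"
  shows "root_splits p (k*e) (f^(Aseq (p^e) C k))"
proof (induction k)
  case 0 show ?case using rs_one[OF assms(1)] by simp
next
  case (Suc k)
  have "root_splits p (e + k*e) (f^(Aseq (p^e) C k * p^e + C))"
    by (rule rs_up[OF assms(2) Suc])
  then show ?case by (simp add: add.commute)
qed

lemma fpp_zero:
  fixes f :: "'a::comm_ring_1"
  assumes "F_pure_ring p TYPE('a)"
  shows "F_pure_pair p f 0"
  unfolding F_pure_pair_def using rs_one[OF assms] by simp

lemma fpp_le1:
  fixes f :: "'a::comm_ring_1"
  assumes p: "p \<ge> 2" and nu: "\<not> f dvd 1" and fp: "F_pure_pair p f lam"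
  shows "lam \<le> 1"
proof (rule ccontr)
  assume "\<not> lam \<le> 1"
  then have l1: "lam > 1" by simp
  obtain n where n: "lam / (lam - 1) < real p ^ n" using real_arch_pow[of "real p"] p by force
  define E where "E = Suc n"
  have "real p ^ n \<le> real p ^ E" unfolding E_def using p by simp
  with n have "lam / (lam - 1) < real p ^ E" by simp
  then have "lam < real p ^ E * (lam - 1)" using l1 by (simp add: field_simps)
  then have "real (p^E) \<le> (real p ^ E - 1) * lam" by (simp add: algebra_simps)
  then have "int (p^E) \<le> \<lfloor>(real p ^ E - 1) * lam\<rfloor>" by (simp add: le_floor_iff)
  then have N: "p^E \<le> nat \<lfloor>(real p ^ E - 1) * lam\<rfloor>" by linarith
  have "root_splits p E (f ^ nat \<lfloor>(real p ^ E - 1) * lam\<rfloor>)"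
  proof -
    have "1 \<le> E" unfolding E_def by simp
    then show ?thesis using fp unfolding F_pure_pair_def by blast
  qed
  then show False using rs_nonunit[OF _ N nu] by blast
qed

theorem mainTheorem4:
  fixes p e :: nat and f :: "'a::comm_ring_1"
  assumes "prime p" and "CHAR('a) = p" and "F_pure_ring p TYPE('a)"
    and "f \<noteq> 0" and "\<not> f dvd 1" and "e \<ge> 1"
  shows "trunc p (fpt p f) e * (real p ^ e / (real p ^ e - 1)) \<le> fpt p f"
proof -
  have p: "p \<ge> 2" using assms(1) prime_ge_2_nat by blast
  define S where "S = {lam. lam \<ge> 0 \<and> F_pure_pair p f lam}"
  have S0: "0 \<in> S" unfolding S_def using fpp_zero[OF assms(3)] by simp
  have Sne: "S \<noteq> {}" using S0 by blast
  have bdd: "bdd_above S" unfolding S_def bdd_above_def using fpp_le1[OF p assms(5)] by blast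
  have fS: "fpt p f = Sup S" unfolding fpt_def S_def ..
  have l0: "0 \<le> fpt p f" unfolding fS using cSup_upper[OF S0 bdd] .
  have l1: "fpt p f \<le> 1" unfolding fS
    by (rule cSup_least[OF Sne]) (use fpp_le1[OF p assms(5)] in \<open>auto simp: S_def\<close>)
  show ?thesis
  proof (cases "fpt p f = 0")
    case True then show ?thesis by (simp add: trunc_def)
  next
    case False
    define lam where "lam = fpt p f"
    have lpos: "0 < lam" using False l0 lam_def by simp
    define q where "q = real p ^ e"
    have q2: "q \<ge> 2"
    proof -
      have h1: "real p ^ 1 \<le> real p ^ e" using p assms(6) by (intro power_increasing) auto
      have h2: "(2::real) \<le> real p" using p by simp
      show ?thesis using h1[unfolded power_one_right] h2 unfolding q_def by linarith
    qed
    define c where "c = \<lceil>lam * q\<rceil> - 1"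
    have cnn: "0 \<le> c" unfolding c_def using lpos q2 by (simp add: le_ceiling_iff)
    define C where "C = nat c"
    have Cc: "real C = of_int c" unfolding C_def using cnn by simp
    have tr: "trunc p lam e = real C / q"
      unfolding Cc c_def q_def using trunc_eq[OF p lpos] l1 lam_def by simp
    have Clt: "real C < lam * q" unfolding Cc c_def by linarith
    have "real C / q < Sup S" unfolding fS[symmetric] lam_def[symmetric]
      using Clt q2 by (simp add: field_simps)
    then obtain mu where mu: "mu \<in> S" "real C / q < mu" using less_cSup_iff[OF Sne bdd] by blast
    have mufp: "F_pure_pair p f mu" using mu unfolding S_def by simp
    define dl where "dl = mu - real C / q"
    have dl: "dl > 0" using mu unfolding dl_def by simp
    obtain n where n: "mu / dl < real p ^ n" using real_arch_pow[of "real p"] p by force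
    define E where "E = e + n"
    have pE: "real p ^ E = q * real p ^ n" unfolding E_def q_def by (simp add: power_add)
    have "mu < real p ^ n * dl" using n dl by (simp add: field_simps)
    also have "\<dots> \<le> real p ^ n * (q * dl)"
    proof -
      have "dl \<le> q * dl" using q2 dl by (simp add: mult_le_cancel_right1)
      then show ?thesis by (intro mult_left_mono) simp_all
    qed
    also have "\<dots> = real p ^ n * (q * mu - real C)" unfolding dl_def using q2 by (simp add: field_simps)
    finally have "mu < real p ^ n * (q * mu - real C)" .
    then have "real (C * p ^ n) \<le> (real p ^ E - 1) * mu" unfolding pE by (simp add: algebra_simps)
    then have "int (C * p ^ n) \<le> \<lfloor>(real p ^ E - 1) * mu\<rfloor>" by (simp add: le_floor_iff)
    then have N: "C * p ^ n \<le> nat \<lfloor>(real p ^ E - 1) * mu\<rfloor>" by linarith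
    have "root_splits p E (f ^ nat \<lfloor>(real p ^ E - 1) * mu\<rfloor>)"
    proof -
      have "1 \<le> E" unfolding E_def using assms(6) by simp
      then show ?thesis using mufp unfolding F_pure_pair_def by blast
    qed
    then have "root_splits p (e+n) (f ^ (C * p ^ n))" using rs_mono[OF _ N] unfolding E_def by blast
    then have spC: "root_splits p e (f ^ C)" using rs_down[OF assms(1,2)] by blast
    define nu where "nu = real C / (q - 1)"
    have nunn: "0 \<le> nu" unfolding nu_def using q2 by simp
    have "F_pure_pair p f nu"
      unfolding F_pure_pair_def
    proof (intro allI impI)
      fix e' :: nat assume e': "1 \<le> e'"
      define K where "K = e' * e"
      have Ke: "e' \<le> K" unfolding K_def using assms(6) by simp
      define d where "d = K - e'"
      have Kd: "K = e' + d" unfolding d_def using Ke by simp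
      have spK: "root_splits p (e' + d) (f ^ Aseq (p^e) C e')"
        using Aseq_splits[OF assms(3) spC, of e'] unfolding Kd[symmetric] K_def .
      define M where "M = nat \<lfloor>(real p ^ e' - 1) * nu\<rfloor>"
      have pe1: "real p ^ e' \<ge> 1" using p by simp
      have "real M \<le> (real p ^ e' - 1) * nu" unfolding M_def using pe1 nunn by simp
      then have "real M * real p ^ d \<le> (real p ^ e' - 1) * nu * real p ^ d" by (simp add: mult_right_mono)
      also have "\<dots> = (real p ^ K - real p ^ d) * nu" unfolding Kd by (simp add: power_add algebra_simps)
      also have "\<dots> \<le> (real p ^ K - 1) * nu" using nunn p by (intro mult_right_mono) simp_all
      also have "\<dots> = real (Aseq (p^e) C e')"
      proof -
        have "real (Aseq (p^e) C e') * (q - 1) = real C * (q ^ e' - 1)"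
          using Aseq_real[of "p^e" C e'] unfolding q_def by simp
        moreover have "q ^ e' = real p ^ K" unfolding q_def K_def by (simp add: power_mult mult.commute)
        ultimately show ?thesis unfolding nu_def using q2 by (simp add: field_simps)
      qed
      finally have "M * p ^ d \<le> Aseq (p^e) C e'" by (simp flip: of_nat_power of_nat_mult)
      then show "root_splits p e' (f ^ nat \<lfloor>(real p ^ e' - 1) * nu\<rfloor>)"
        using rs_down[OF assms(1,2) spK] unfolding M_def by blast
    qed
    then have "nu \<in> S" unfolding S_def using nunn by simp
    then have "nu \<le> lam" unfolding lam_def fS using cSup_upper[OF _ bdd] by blast
    moreover have "trunc p lam e * (real p ^ e / (real p ^ e - 1)) = nu"
      unfolding tr nu_def q_def[symmetric] using q2 by (simp add: field_simps)
    ultimately show ?thesis unfolding lam_def by simp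
  qed
qed

end
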